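(* Let $(\mathcal A,\rho)$ be a pseudo-quasimetric space. Define $x\sim y$ iff $\rho(x,y)=0$, let $\tilde{\mathcal A}=\mathcal A/\sim$ with classes $[x]$, and set $\tilde\rho([x],[y])=\inf\{\rho(a,b):a\in[x],b\in[y]\}$. Then $(\tilde{\mathcal A},\tilde\rho)$ is a pseudo-metric space.
   Context: A pseudo-quasimetric space is a pair $(\mathcal A,\rho)$ with $\rho:\mathcal A\times\mathcal A\to\mathbb R_{\ge0}$ such that for all $x,y,z$: $\rho(x,x)=0$; $\rho(x,y)=\rho(y,x)$; and $\rho(x,z)\le C(\rho(x,y)+\rho(y,z))$ for a constant $C\ge1$ independent of $x,y,z$. It is a pseudo-metric space if in addition $x\ne y$ implies $\rho(x,y)>0$. (The relation $\sim$ is an equivalence relation.) *)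

theory Defs
  imports Complex_Main
begin

definition pseudo_quasimetric :: "'a set \<Rightarrow> ('a \<Rightarrow> 'a \<Rightarrow> real) \<Rightarrow> bool" where
  "pseudo_quasimetric A \<rho> \<longleftrightarrow>
     (\<forall>x\<in>A. \<forall>y\<in>A. \<rho> x y \<ge> 0) \<and>
     (\<forall>x\<in>A. \<rho> x x = 0) \<and>
     (\<forall>x\<in>A. \<forall>y\<in>A. \<rho> x y = \<rho> y x) \<and>
     (\<exists>C\<ge>1. \<forall>x\<in>A. \<forall>y\<in>A. \<forall>z\<in>A. \<rho> x z \<le> C * (\<rho> x y + \<rho> y z))"

definition pseudo_metric :: "'a set \<Rightarrow> ('a \<Rightarrow> 'a \<Rightarrow> real) \<Rightarrow> bool" where
  "pseudo_metric A \<rho> \<longleftrightarrow>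
     pseudo_quasimetric A \<rho> \<and> (\<forall>x\<in>A. \<forall>y\<in>A. x \<noteq> y \<longrightarrow> \<rho> x y > 0)"

definition zero_rel :: "'a set \<Rightarrow> ('a \<Rightarrow> 'a \<Rightarrow> real) \<Rightarrow> ('a \<times> 'a) set" where
  "zero_rel A \<rho> = {(x, y). x \<in> A \<and> y \<in> A \<and> \<rho> x y = 0}"

definition quot_dist :: "('a \<Rightarrow> 'a \<Rightarrow> real) \<Rightarrow> 'a set \<Rightarrow> 'a set \<Rightarrow> real" where
  "quot_dist \<rho> X Y = Inf {\<rho> a b | a b. a \<in> X \<and> b \<in> Y}"

end

theory Submission
  imports Defs
begin

lemma key_bound:
  fixes \<rho> :: "'a \<Rightarrow> 'a \<Rightarrow> real"
  assumes C: "C \<ge> 1" and tri: "\<forall>x\<in>A. \<forall>y\<in>A. \<forall>z\<in>A. \<rho> x z \<le> C * (\<rho> x y + \<rho> y z)"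
    and sym: "\<forall>x\<in>A. \<forall>y\<in>A. \<rho> x y = \<rho> y x"
    and A: "x \<in> A" "y \<in> A" "a \<in> A" "b \<in> A" and xa: "\<rho> x a = 0" and yb: "\<rho> y b = 0"
  shows "\<rho> x y \<le> C * C * \<rho> a b"
proof -
  have 1: "\<rho> x y \<le> C * \<rho> a y" using tri A xa by fastforce
  have "\<rho> b y = 0" using sym A yb by metis
  hence 2: "\<rho> a y \<le> C * \<rho> a b" using tri A by fastforce
  have "C * \<rho> a y \<le> C * (C * \<rho> a b)" using 2 C by simp
  thus ?thesis using 1 by simp
qed

theorem lemma2p1:
  fixes A :: "'a set" and \<rho> :: "'a \<Rightarrow> 'a \<Rightarrow> real"
  assumes "pseudo_quasimetric A \<rho>"
  shows "pseudo_metric (A // zero_rel A \<rho>) (quot_dist \<rho>)"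
proof -
  from assms obtain C where C: "C \<ge> 1"
    and tri: "\<forall>x\<in>A. \<forall>y\<in>A. \<forall>z\<in>A. \<rho> x z \<le> C * (\<rho> x y + \<rho> y z)"
    and nn: "\<forall>x\<in>A. \<forall>y\<in>A. \<rho> x y \<ge> 0"
    and refl: "\<forall>x\<in>A. \<rho> x x = 0"
    and sym: "\<forall>x\<in>A. \<forall>y\<in>A. \<rho> x y = \<rho> y x"
    unfolding pseudo_quasimetric_def by blast
  define cl where "cl x = {y. y \<in> A \<and> \<rho> x y = 0}" for x
  have Q: "A // zero_rel A \<rho> = cl ` A"
    unfolding quotient_def cl_def zero_rel_def by auto
  have xin: "x \<in> cl x" if "x \<in> A" for x using that refl cl_def by auto
  have clA: "cl x \<subseteq> A" for x by (auto simp: cl_def)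
  have bounds: "\<rho> x y \<le> C * C * quot_dist \<rho> (cl x) (cl y) \<and> quot_dist \<rho> (cl x) (cl y) \<le> \<rho> x y"
    if "x \<in> A" "y \<in> A" for x y
  proof
    let ?S = "{\<rho> a b | a b. a \<in> cl x \<and> b \<in> cl y}"
    have ne: "?S \<noteq> {}" using xin that by blast
    have bdd: "bdd_below ?S" unfolding bdd_below_def using nn clA by blast
    show "quot_dist \<rho> (cl x) (cl y) \<le> \<rho> x y"
      unfolding quot_dist_def using xin that bdd by (intro cInf_lower) auto
    have "\<rho> x y / (C * C) \<le> Inf ?S"
    proof (rule cInf_greatest[OF ne])
      fix s assume "s \<in> ?S"
      then obtain a b where ab: "a \<in> cl x" "b \<in> cl y" "s = \<rho> a b" by blast
      have "\<rho> x y \<le> C * C * \<rho> a b"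
        using key_bound[OF C tri sym] that ab clA by (auto simp: cl_def)
      thus "\<rho> x y / (C * C) \<le> s" using C ab by (simp add: divide_le_eq mult.commute)
    qed
    thus "\<rho> x y \<le> C * C * quot_dist \<rho> (cl x) (cl y)"
      using C unfolding quot_dist_def by (simp add: divide_le_eq mult.commute)
  qed
  have nnq: "quot_dist \<rho> (cl x) (cl y) \<ge> 0" if "x \<in> A" "y \<in> A" for x y
  proof -
    have "0 \<le> \<rho> x y" using nn that by blast
    also have "\<dots> \<le> C * C * quot_dist \<rho> (cl x) (cl y)" using bounds that by blast
    finally have "0 \<le> C * C * quot_dist \<rho> (cl x) (cl y)" .
    moreover have "C * C > 0" using C by simp
    ultimately show ?thesis using zero_le_mult_iff by (metis not_le)
  qed
  have symq: "quot_dist \<rho> X Y = quot_dist \<rho> Y X" if "X \<subseteq> A" "Y \<subseteq> A" for X Y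
  proof -
    have "{\<rho> a b | a b. a \<in> X \<and> b \<in> Y} = {\<rho> a b | a b. a \<in> Y \<and> b \<in> X}"
      using sym that by blast
    thus ?thesis unfolding quot_dist_def by simp
  qed
  show ?thesis unfolding pseudo_metric_def pseudo_quasimetric_def Q
  proof (intro conjI ballI impI)
    fix X Y assume "X \<in> cl ` A" "Y \<in> cl ` A"
    then obtain x y where "x \<in> A" "y \<in> A" "X = cl x" "Y = cl y" by blast
    thus "quot_dist \<rho> X Y \<ge> 0" using nnq by blast
  next
    fix X assume "X \<in> cl ` A"
    then obtain x where x: "x \<in> A" "X = cl x" by blast
    thus "quot_dist \<rho> X X = 0" using nnq[of x x] bounds[of x x] refl by force
  next
    fix X Y assume "X \<in> cl ` A" "Y \<in> cl ` A"
    thus "quot_dist \<rho> X Y = quot_dist \<rho> Y X" using symq clA by blast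
  next
    show "\<exists>D\<ge>1. \<forall>X\<in>cl ` A. \<forall>Y\<in>cl ` A. \<forall>Z\<in>cl ` A.
            quot_dist \<rho> X Z \<le> D * (quot_dist \<rho> X Y + quot_dist \<rho> Y Z)"
    proof (intro exI[of _ "C * (C * C)"] conjI ballI)
      show "1 \<le> C * (C * C)" using C by (metis mult_mono' mult_1_left zero_le_one order_trans)
    next
      fix X Y Z assume "X \<in> cl ` A" "Y \<in> cl ` A" "Z \<in> cl ` A"
      then obtain x y z where xyz: "x \<in> A" "y \<in> A" "z \<in> A" "X = cl x" "Y = cl y" "Z = cl z" by blast
      have "quot_dist \<rho> X Z \<le> \<rho> x z" using bounds xyz by blast
      also have "\<dots> \<le> C * (\<rho> x y + \<rho> y z)" using tri xyz by blast
      also have "\<dots> \<le> C * (C * C * quot_dist \<rho> X Y + C * C * quot_dist \<rho> Y Z)"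
        using bounds[of x y] bounds[of y z] xyz C
        by (intro mult_left_mono add_mono) auto
      also have "\<dots> = C * (C * C) * (quot_dist \<rho> X Y + quot_dist \<rho> Y Z)"
        by (simp add: algebra_simps)
      finally show "quot_dist \<rho> X Z \<le> C * (C * C) * (quot_dist \<rho> X Y + quot_dist \<rho> Y Z)" .
    qed
  next
    fix X Y assume "X \<in> cl ` A" "Y \<in> cl ` A" "X \<noteq> Y"
    then obtain x y where xy: "x \<in> A" "y \<in> A" "X = cl x" "Y = cl y" "cl x \<noteq> cl y" by blast
    have "\<rho> x y \<noteq> 0"
    proof
      assume h: "\<rho> x y = 0"
      have "cl x = cl y"
      proof (intro set_eqI iffI)
        fix w assume "w \<in> cl x"
        hence w: "w \<in> A" "\<rho> x w = 0" by (auto simp: cl_def)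
        have "\<rho> y w \<le> C * (\<rho> y x + \<rho> x w)" using tri xy w by blast
        moreover have "\<rho> y x = 0" using sym xy h by metis
        moreover have "\<rho> y w \<ge> 0" using nn xy w by blast
        ultimately show "w \<in> cl y" using w by (auto simp: cl_def)
      next
        fix w assume "w \<in> cl y"
        hence w: "w \<in> A" "\<rho> y w = 0" by (auto simp: cl_def)
        have "\<rho> x w \<le> C * (\<rho> x y + \<rho> y w)" using tri xy w by blast
        moreover have "\<rho> x w \<ge> 0" using nn xy w by blast
        ultimately show "w \<in> cl x" using w h by (auto simp: cl_def)
      qed
      thus False using xy by blast
    qed
    hence "\<rho> x y > 0" using nn xy by force
    hence "0 < C * C * quot_dist \<rho> X Y" using bounds xy by force
    thus "quot_dist \<rho> X Y > 0" using C by (simp add: zero_less_mult_iff)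
  qed
qed

end
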